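(* Assume $\lfloor (M_1+\dots+M_n)/p\rfloor=n-1$ (ample reduction). Then for every $l\in\{1,\dots,n-1\}$ and every subset $I\subset\{1,\dots,n\}$ with $|I|=l$ we have $(l-1)p<\sum_{i\in I}M_i<lp$.
   Context: $p,q$ are primes, $n$ a positive integer with $p>n\ge2$, $p>q$; $m_1,\dots,m_n$ are positive integers $<q$, and $M_i$ is the least positive integer with $M_i\equiv -m_iq^{-1}\pmod p$ (so $1\le M_i\le p-1$). *)

theory Defs
  imports "HOL-Number_Theory.Number_Theory"
begin

definition reducedM :: "nat \<Rightarrow> nat \<Rightarrow> nat \<Rightarrow> nat" where
  "reducedM p q m = (LEAST x::nat. 0 < x \<and>
      [int x = - int m * modular_inverse (int p) (int q)] (mod int p))"

end

theory Submission
  imports Defs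
begin

lemma reducedM_less:
  assumes "prime p" "prime q" "q < p" "0 < m" "m < q"
  shows "reducedM p q m < p"
proof -
  define v where "v = (- int m * modular_inverse (int p) (int q)) mod int p"
  have p1: "int p > 1" using assms prime_gt_1_nat by auto
  have cop: "coprime (int q) (int p)"
    using assms by (simp add: primes_coprime)
  have ipos: "modular_inverse (int p) (int q) > 0"
    using mult_modular_inverse_int_pos[OF p1] cop by blast
  have iless: "modular_inverse (int p) (int q) < int p"
    using modular_inverse_int_less p1 by auto
  have pr: "prime (int p)" using assms by simp
  have nd1: "\<not> int p dvd modular_inverse (int p) (int q)"
    using ipos iless zdvd_imp_le by fastforce
  have nd2: "\<not> int p dvd int m" proof
    assume "int p dvd int m" hence "p dvd m" by simp
    hence "p \<le> m" using assms(4) by (simp add: dvd_imp_le)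
    thus False using assms by linarith
  qed
  have nd: "\<not> int p dvd (- int m * modular_inverse (int p) (int q))"
    using nd1 nd2 pr by (simp add: prime_dvd_mult_iff)
  have v0: "v \<noteq> 0" using nd unfolding v_def by (simp add: dvd_eq_mod_eq_0)
  have vge: "v \<ge> 0" "v < int p" unfolding v_def using p1 by auto
  have c: "[int (nat v) = - int m * modular_inverse (int p) (int q)] (mod int p)"
    using vge unfolding v_def by (simp add: cong_def)
  have "0 < nat v" using v0 vge by auto
  hence "reducedM p q m \<le> nat v" unfolding reducedM_def using c by (intro Least_le) auto
  thus ?thesis using vge by linarith
qed

theorem lemma2p7:
  fixes p q n :: nat and m M :: "nat \<Rightarrow> nat"
  assumes "prime p" and "prime q" and "2 \<le> n" and "n < p" and "q < p"
    and "\<forall>i\<in>{1..n}. 0 < m i \<and> m i < q"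
    and "\<forall>i\<in>{1..n}. M i = reducedM p q (m i)"
    and "(\<Sum>i\<in>{1..n}. M i) div p = n - 1"
  shows "\<forall>l\<in>{1..n-1}. \<forall>I. I \<subseteq> {1..n} \<and> card I = l \<longrightarrow>
           (l - 1) * p < (\<Sum>i\<in>I. M i) \<and> (\<Sum>i\<in>I. M i) < l * p"
proof (intro ballI allI impI)
  fix l I assume l: "l \<in> {1..n-1}" and I: "I \<subseteq> {1..n} \<and> card I = l"
  have Mle: "M i \<le> p - 1" if "i \<in> {1..n}" for i
  proof -
    have "0 < m i" "m i < q" using assms(6) that by auto
    hence "reducedM p q (m i) < p" by (rule reducedM_less[OF assms(1,2,5)])
    moreover have "M i = reducedM p q (m i)" using assms(7) that by blast
    ultimately show ?thesis by linarith
  qed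
  have fin: "finite I" using I finite_subset by blast
  have p0: "p > 0" using assms(1) prime_gt_0_nat by blast
  have s1: "(\<Sum>i\<in>I. M i) \<le> (\<Sum>i\<in>I. p - 1)"
    proof (rule sum_mono)
    fix i assume "i \<in> I" thus "M i \<le> p - 1" using I Mle by blast
  qed
  hence up: "(\<Sum>i\<in>I. M i) \<le> l * (p - 1)" using I by simp
  have "l * (p - 1) < l * p" using l p0 by (simp add: diff_less)
  moreover
  define J where "J = {1..n} - I"
  have cJ: "card J = n - l" using I unfolding J_def by (simp add: card_Diff_subset fin)
  have sJ: "(\<Sum>i\<in>J. M i) \<le> (n - l) * (p - 1)"
  proof -
    have "(\<Sum>i\<in>J. M i) \<le> (\<Sum>i\<in>J. p - 1)"
    proof (rule sum_mono)
      fix i assume "i \<in> J" thus "M i \<le> p - 1" using Mle unfolding J_def by blast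
    qed
    thus ?thesis using cJ by simp
  qed
  have tot: "(\<Sum>i\<in>{1..n}. M i) = (\<Sum>i\<in>I. M i) + (\<Sum>i\<in>J. M i)"
    unfolding J_def using I sum.subset_diff[of I "{1..n}" M] by auto
  have "(n - 1) * p \<le> (\<Sum>i\<in>{1..n}. M i)"
    using assms(8) p0 by (metis div_times_less_eq_dividend mult.commute)
  hence ge: "(n - 1) * p \<le> (\<Sum>i\<in>I. M i) + (n - l) * (p - 1)" using tot sJ by linarith
  have "(n - 1) * p = (l - 1) * p + (n - l) * p" proof -
    have "n - 1 = (l - 1) + (n - l)" using l by auto
    thus ?thesis by (simp add: add_mult_distrib)
  qed
  moreover have "(n - l) * p = (n - l) * (p - 1) + (n - l)" using p0
    by (metis Suc_diff_1 mult_Suc_right add.commute)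
  moreover have "n - l \<ge> 1" using l by auto
  ultimately show "(l - 1) * p < (\<Sum>i\<in>I. M i) \<and> (\<Sum>i\<in>I. M i) < l * p"
    using ge up by linarith
qed

end
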